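(* Let $L$ be a construction of an ASC-hypergraph $H$ and let $Y\in L$. Then $L_Y$ is a construction of the ASC-hypergraph $H_Y$.
   Context: A hypergraph is a finite set $H$ of nonempty subsets of some finite set; its carrier is $\bigcup H$. For a family $F$ and set $Y$, $F_Y=\{X\in F\mid X\subseteq Y\}$. A hypergraph partition of $H$ is a partition $\{H_1,\dots,H_n\}$ ($n\ge0$) of the set $H$ with $\{\bigcup H_1,\dots,\bigcup H_n\}$ a partition of $\bigcup H$; $H$ is connected if it has exactly one hypergraph partition; the finest hypergraph partition is the unique one whose blocks are connected. $H$ is atomic if $\{x\}\in H$ for all $x\in\bigcup H$; saturated if $X_1,X_2\in H$ with $X_1\cap X_2\neq\emptyset$ imply $X_1\cup X_2\in H$. An ASC-hypergraph is one that is atomic, saturated and connected. Constructions of an atomic $H$, by induction on $|\bigcup H|$: (0) $\emptyset$ is the only construction of $\emptyset$; (1) if $|\bigcup H|\ge1$, $H$ connected, $x\in\bigcup H$, $K$ a construction of $H_{\bigcup H\setminus\{x\}}$, then $K\cup\{\bigcup H\}$ is a construction of $H$; (2) if $H$ is not connected with finest hypergraph partition $\{H_1,\dots,H_n\}$, $n\ge2$, and $K_i$ is a construction of $H_i$, then $K_1\cup\dots\cup K_n$ is a construction of $H$. *)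

theory Defs
  imports Main "HOL-Library.Disjoint_Sets"
begin

definition hypergraph :: "'a set set \<Rightarrow> bool" where
  "hypergraph H \<longleftrightarrow> finite H \<and> (\<forall>X\<in>H. X \<noteq> {} \<and> finite X)"

definition restr :: "'a set set \<Rightarrow> 'a set \<Rightarrow> 'a set set" where
  "restr F Y = {X \<in> F. X \<subseteq> Y}"

definition hyp_partition :: "'a set set \<Rightarrow> 'a set set set \<Rightarrow> bool" where
  "hyp_partition H P \<longleftrightarrow> partition_on H P \<and> inj_on Union P
     \<and> partition_on (\<Union>H) (Union ` P)"

definition hconnected :: "'a set set \<Rightarrow> bool" where
  "hconnected H \<longleftrightarrow> (\<exists>!P. hyp_partition H P)"

definition finest_hyp_partition :: "'a set set \<Rightarrow> 'a set set set \<Rightarrow> bool" where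
  "finest_hyp_partition H P \<longleftrightarrow> hyp_partition H P \<and> (\<forall>B\<in>P. hconnected B)"

definition atomic :: "'a set set \<Rightarrow> bool" where
  "atomic H \<longleftrightarrow> (\<forall>x\<in>\<Union>H. {x} \<in> H)"

definition saturated :: "'a set set \<Rightarrow> bool" where
  "saturated H \<longleftrightarrow> (\<forall>X1\<in>H. \<forall>X2\<in>H. X1 \<inter> X2 \<noteq> {} \<longrightarrow> X1 \<union> X2 \<in> H)"

definition ASC :: "'a set set \<Rightarrow> bool" where
  "ASC H \<longleftrightarrow> atomic H \<and> saturated H \<and> hconnected H"

inductive construction :: "'a set set \<Rightarrow> 'a set set \<Rightarrow> bool" where
  empty: "construction {} {}"
| conn: "\<lbrakk> hypergraph H; atomic H; card (\<Union>H) \<ge> 1; hconnected H; x \<in> \<Union>H;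
           construction K (restr H (\<Union>H - {x})) \<rbrakk>
         \<Longrightarrow> construction (K \<union> {\<Union>H}) H"
| disconn: "\<lbrakk> hypergraph H; atomic H; \<not> hconnected H; finest_hyp_partition H P;
              card P \<ge> 2; \<forall>B\<in>P. construction (K B) B \<rbrakk>
         \<Longrightarrow> construction (\<Union>B\<in>P. K B) H"

end

theory Submission
  imports Defs
begin

lemma constr_sub: "construction K H \<Longrightarrow> \<forall>Z\<in>K. Z \<noteq> {} \<and> Z \<subseteq> \<Union>H"
proof (induction rule: construction.induct)
  case empty
  then show ?case by simp
next
  case (conn H x K)
  have ne: "\<Union>H \<noteq> {}" using conn.hyps(5) by auto
  have sub: "\<Union>(restr H (\<Union>H - {x})) \<subseteq> \<Union>H" unfolding restr_def by auto
  show ?case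
  proof
    fix Z assume "Z \<in> K \<union> {\<Union>H}"
    then consider "Z \<in> K" | "Z = \<Union>H" by auto
    then show "Z \<noteq> {} \<and> Z \<subseteq> \<Union>H"
    proof cases
      case 1
      then have "Z \<noteq> {}" "Z \<subseteq> \<Union>(restr H (\<Union>H - {x}))" using conn.IH by auto
      then show ?thesis using sub by auto
    qed (use ne in auto)
  qed
next
  case (disconn H P K)
  have "\<forall>B\<in>P. B \<subseteq> H" using disconn.hyps(4)
    unfolding finest_hyp_partition_def hyp_partition_def partition_on_def by auto
  show ?case
  proof
    fix Z assume "Z \<in> (\<Union>B\<in>P. K B)"
    then obtain B where "B \<in> P" "Z \<in> K B" by auto
    then have "Z \<noteq> {}" "Z \<subseteq> \<Union>B" "B \<subseteq> H" using disconn.IH \<open>\<forall>B\<in>P. B \<subseteq> H\<close> by auto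
    then show "Z \<noteq> {} \<and> Z \<subseteq> \<Union>H" by auto
  qed
qed

lemma disj_blocks:
  assumes "hyp_partition H P" "B \<in> P" "B' \<in> P" "B \<noteq> B'"
  shows "\<Union>B \<inter> \<Union>B' = {}"
proof -
  have "\<Union>B \<noteq> \<Union>B'" using assms unfolding hyp_partition_def inj_on_def by blast
  moreover have "disjoint (Union ` P)" using assms(1) unfolding hyp_partition_def partition_on_def by blast
  ultimately show ?thesis using assms(2,3) unfolding disjoint_def pairwise_def disjnt_def by blast
qed

lemma restr_self: "restr H (\<Union>H) = H" by (auto simp: restr_def)
lemma restr_ins: "\<forall>Z\<in>K. Z \<subseteq> \<Union>H \<Longrightarrow> restr (K \<union> {\<Union>H}) (\<Union>H) = K \<union> {\<Union>H}" by (auto simp: restr_def)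
lemma sat_restr: "saturated H \<Longrightarrow> saturated (restr H S)" unfolding saturated_def restr_def by (auto simp del: Un_iff)
lemma restr_restr: "Y \<subseteq> S \<Longrightarrow> restr (restr H S) Y = restr H Y" by (auto simp: restr_def)
lemma restr_notin: "\<not> A \<subseteq> Y \<Longrightarrow> restr (K \<union> {A}) Y = restr K Y" by (auto simp: restr_def)
lemma restr_Un_sub: "Y \<subseteq> \<Union>(restr H S) \<Longrightarrow> Y \<subseteq> S" unfolding restr_def by blast

lemma main:
  "construction L H \<Longrightarrow> saturated H \<Longrightarrow> Y \<in> L
   \<Longrightarrow> ASC (restr H Y) \<and> construction (restr L Y) (restr H Y)"
proof (induction arbitrary: Y rule: construction.induct)
  case empty
  then show ?case by simp
next
  case (conn H x K)
  show ?case
  proof (cases "Y = \<Union>H")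
    case True
    have rH: "restr H Y = H" using True restr_self by simp
    have "\<Union>(restr H (\<Union>H - {x})) \<subseteq> \<Union>H" by (auto simp: restr_def)
    then have "\<forall>Z\<in>K. Z \<subseteq> \<Union>H" using constr_sub[OF conn.hyps(6)] by blast
    then have rL: "restr (K \<union> {\<Union>H}) Y = K \<union> {\<Union>H}" using True restr_ins by simp
    have "ASC H" unfolding ASC_def using conn.hyps(2,4) conn.prems(1) by simp
    moreover have "construction (K \<union> {\<Union>H}) H"
      using construction.conn[OF conn.hyps] .
    ultimately show ?thesis using rH rL by simp
  next
    case False
    then have YK: "Y \<in> K" using conn.prems(2) by simp
    have sat: "saturated (restr H (\<Union>H - {x}))"
      using conn.prems(1) by (rule sat_restr)
    have "Y \<subseteq> \<Union>(restr H (\<Union>H - {x}))" using constr_sub[OF conn.hyps(6)] YK by blast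
    then have Ysub: "Y \<subseteq> \<Union>H - {x}" by (rule restr_Un_sub)
    have r1: "restr (restr H (\<Union>H - {x})) Y = restr H Y" using Ysub by (rule restr_restr)
    have "\<not> \<Union>H \<subseteq> Y" using Ysub conn.hyps(5) by blast
    then have r2: "restr (K \<union> {\<Union>H}) Y = restr K Y" by (rule restr_notin)
    show ?thesis using conn.IH[OF sat YK] unfolding r1 r2 .
  qed
next
  case (disconn H P K)
  from disconn.prems(2) obtain B where BP: "B \<in> P" and YB: "Y \<in> K B" by blast
  have hp: "hyp_partition H P" using disconn.hyps(4) unfolding finest_hyp_partition_def by blast
  have BH: "\<forall>B\<in>P. B \<subseteq> H" and UP: "\<Union>P = H" using hp
    unfolding hyp_partition_def partition_on_def by blast+
  have satB: "saturated B"
    unfolding saturated_def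
  proof (intro ballI impI)
    fix X1 X2 assume X: "X1 \<in> B" "X2 \<in> B" "X1 \<inter> X2 \<noteq> {}"
    then have "X1 \<union> X2 \<in> H" using disconn.prems(1) BH BP unfolding saturated_def by blast
    then obtain B' where B': "B' \<in> P" "X1 \<union> X2 \<in> B'" using UP by blast
    have "\<Union>B \<inter> \<Union>B' \<noteq> {}" using X B' by blast
    then have "B' = B" using disj_blocks[OF hp BP B'(1)] by blast
    then show "X1 \<union> X2 \<in> B" using B' by simp
  qed
  have cB: "construction (K B) B" using disconn.IH BP by blast
  have IHB: "ASC (restr B Y) \<and> construction (restr (K B) Y) (restr B Y)"
    using disconn.IH BP satB YB by blast
  have Ysub: "Y \<noteq> {}" "Y \<subseteq> \<Union>B" using constr_sub[OF cB] YB by blast+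
  have r1: "restr H Y = restr B Y"
  proof -
    have "X \<in> B" if XH: "X \<in> H" "X \<subseteq> Y" for X
    proof -
      obtain B' where B': "B' \<in> P" "X \<in> B'" using UP XH by blast
      have "X \<noteq> {}" using disconn.hyps(1) XH unfolding hypergraph_def by blast
      then have "\<Union>B \<inter> \<Union>B' \<noteq> {}" using B' XH Ysub by blast
      then have "B' = B" using disj_blocks[OF hp BP B'(1)] by blast
      then show ?thesis using B' by simp
    qed
    then show ?thesis using BH BP unfolding restr_def by blast
  qed
  have r2: "restr (\<Union>B'\<in>P. K B') Y = restr (K B) Y"
  proof -
    have "B' = B" if ZH: "B' \<in> P" "Z \<in> K B'" "Z \<subseteq> Y" for B' Z
    proof -
      have "construction (K B') B'" using disconn.IH ZH by blast
      then have "Z \<noteq> {}" "Z \<subseteq> \<Union>B'" using constr_sub ZH by blast+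
      then have "\<Union>B \<inter> \<Union>B' \<noteq> {}" using ZH Ysub by blast
      then show ?thesis using disj_blocks[OF hp BP ZH(1)] by blast
    qed
    then show ?thesis using BP unfolding restr_def by blast
  qed
  show ?case using IHB r1 r2 by simp
qed

theorem proposition7p1:
  fixes H L :: "'a set set" and Y :: "'a set"
  assumes "hypergraph H" and "ASC H" and "construction L H" and "Y \<in> L"
  shows "ASC (restr H Y) \<and> construction (restr L Y) (restr H Y)"
  using main[OF assms(3) _ assms(4)] assms(2) unfolding ASC_def by blast

end
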